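(* For every natural number $n \geq 2$, there exists a regular graph $G_n$ with $\chi(G_n) = n$ and $\chi_2(G_n) = 2\chi(G_n)$.
   Context: All graphs are finite and simple. A proper $k$-colouring of a graph $G$ is a map $c\colon V(G)\to[k]$ with $c(u)\neq c(v)$ for every edge $uv$; $\chi(G)$ is the chromatic number. For an integer $r\ge 1$, an $r$-dynamic $k$-colouring of $G$ is a proper $k$-colouring $c$ such that for every vertex $v$, the set $c(N(v))$ of colours used on the neighbourhood $N(v)$ has size at least $\min\{r, d(v)\}$, where $d(v)$ is the degree of $v$. The $r$-dynamic chromatic number $\chi_r(G)$ is the least $k$ such that $G$ has an $r$-dynamic $k$-colouring. In particular $\chi_2(G)$ (the dynamic chromatic number) is the least number of colours in a proper colouring in which the neighbourhood of every vertex of degree at least $2$ is not monochromatic. *)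

theory Defs
  imports Main
begin

definition simple_graph :: "'a set \<Rightarrow> ('a \<Rightarrow> 'a \<Rightarrow> bool) \<Rightarrow> bool" where
  "simple_graph V E \<longleftrightarrow> finite V \<and> (\<forall>u v. E u v \<longrightarrow> u \<in> V \<and> v \<in> V)
     \<and> (\<forall>u v. E u v \<longrightarrow> E v u) \<and> (\<forall>v. \<not> E v v)"

definition nbhd :: "'a set \<Rightarrow> ('a \<Rightarrow> 'a \<Rightarrow> bool) \<Rightarrow> 'a \<Rightarrow> 'a set" where
  "nbhd V E v = {u \<in> V. E v u}"

definition degree :: "'a set \<Rightarrow> ('a \<Rightarrow> 'a \<Rightarrow> bool) \<Rightarrow> 'a \<Rightarrow> nat" where
  "degree V E v = card (nbhd V E v)"

definition regular :: "'a set \<Rightarrow> ('a \<Rightarrow> 'a \<Rightarrow> bool) \<Rightarrow> bool" where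
  "regular V E \<longleftrightarrow> (\<exists>d. \<forall>v\<in>V. degree V E v = d)"

definition proper_colouring :: "'a set \<Rightarrow> ('a \<Rightarrow> 'a \<Rightarrow> bool) \<Rightarrow> nat \<Rightarrow> ('a \<Rightarrow> nat) \<Rightarrow> bool" where
  "proper_colouring V E k c \<longleftrightarrow> (\<forall>v\<in>V. c v \<in> {1..k}) \<and> (\<forall>u\<in>V. \<forall>v\<in>V. E u v \<longrightarrow> c u \<noteq> c v)"

definition chromatic_number :: "'a set \<Rightarrow> ('a \<Rightarrow> 'a \<Rightarrow> bool) \<Rightarrow> nat" where
  "chromatic_number V E = (LEAST k. \<exists>c. proper_colouring V E k c)"

definition r_dynamic_colouring :: "nat \<Rightarrow> 'a set \<Rightarrow> ('a \<Rightarrow> 'a \<Rightarrow> bool) \<Rightarrow> nat \<Rightarrow> ('a \<Rightarrow> nat) \<Rightarrow> bool" where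
  "r_dynamic_colouring r V E k c \<longleftrightarrow> proper_colouring V E k c \<and>
     (\<forall>v\<in>V. card (c ` nbhd V E v) \<ge> min r (degree V E v))"

definition r_dynamic_chromatic_number :: "nat \<Rightarrow> 'a set \<Rightarrow> ('a \<Rightarrow> 'a \<Rightarrow> bool) \<Rightarrow> nat" where
  "r_dynamic_chromatic_number r V E = (LEAST k. \<exists>c. r_dynamic_colouring r V E k c)"

end

theory Submission
  imports Defs "HOL-Library.Countable" "HOL-Library.Nat_Bijection"
begin


lemma nbhd_subset: "nbhd V E v \<subseteq> V" by (auto simp: nbhd_def)

definition imgE :: "('a \<Rightarrow> 'b) \<Rightarrow> 'a set \<Rightarrow> ('a \<Rightarrow> 'a \<Rightarrow> bool) \<Rightarrow> 'b \<Rightarrow> 'b \<Rightarrow> bool" where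
  "imgE f V E u w = (\<exists>x\<in>V. \<exists>y\<in>V. u = f x \<and> w = f y \<and> E x y)"

lemma imgE_nbhd:
  assumes inj: "inj_on f V" and v: "v \<in> V"
  shows "nbhd (f ` V) (imgE f V E) (f v) = f ` nbhd V E v"
  using inj v unfolding nbhd_def imgE_def by (auto simp: inj_on_eq_iff)

lemma imgE_degree:
  assumes inj: "inj_on f V" and v: "v \<in> V"
  shows "degree (f ` V) (imgE f V E) (f v) = degree V E v"
  unfolding degree_def imgE_nbhd[OF inj v]
  by (rule card_image[OF inj_on_subset[OF inj nbhd_subset]])

lemma imgE_simple:
  assumes inj: "inj_on f V" and sg: "simple_graph V E"
  shows "simple_graph (f ` V) (imgE f V E)"
  using inj sg unfolding simple_graph_def imgE_def by (auto simp: inj_on_eq_iff)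

lemma imgE_regular:
  assumes inj: "inj_on f V" and r: "regular V E"
  shows "regular (f ` V) (imgE f V E)"
  using r imgE_degree[OF inj] unfolding regular_def by auto

lemma proper_cong: "\<forall>v\<in>V. c v = c' v \<Longrightarrow> proper_colouring V E k c = proper_colouring V E k c'"
  unfolding proper_colouring_def by auto

lemma dyn_cong: "\<forall>v\<in>V. c v = c' v \<Longrightarrow> r_dynamic_colouring r V E k c = r_dynamic_colouring r V E k c'"
proof -
  assume h: "\<forall>v\<in>V. c v = c' v"
  have "\<And>v. c ` nbhd V E v = c' ` nbhd V E v"
    using h nbhd_subset[of V E] by (intro image_cong) auto
  then show ?thesis using proper_cong[OF h] unfolding r_dynamic_colouring_def by simp
qed

lemma imgE_proper:
  assumes inj: "inj_on f V"
  shows "proper_colouring (f ` V) (imgE f V E) k c = proper_colouring V E k (c \<circ> f)"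
  using inj unfolding proper_colouring_def imgE_def by (auto simp: inj_on_eq_iff) 

lemma imgE_dyn:
  assumes inj: "inj_on f V"
  shows "r_dynamic_colouring r (f ` V) (imgE f V E) k c = r_dynamic_colouring r V E k (c \<circ> f)"
proof -
  have "(\<forall>u\<in>f ` V. min r (degree (f ` V) (imgE f V E) u) \<le> card (c ` nbhd (f ` V) (imgE f V E) u))
     = (\<forall>v\<in>V. min r (degree V E v) \<le> card ((c \<circ> f) ` nbhd V E v))"
    using imgE_nbhd[OF inj] imgE_degree[OF inj] by (simp add: image_comp)
  then show ?thesis unfolding r_dynamic_colouring_def imgE_proper[OF inj] by simp
qed

lemma imgE_chi:
  assumes inj: "inj_on f V"
  shows "chromatic_number (f ` V) (imgE f V E) = chromatic_number V E"
proof -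
  have "\<And>k. (\<exists>c. proper_colouring (f ` V) (imgE f V E) k c) = (\<exists>c. proper_colouring V E k c)"
  proof
    fix k assume "\<exists>c. proper_colouring (f ` V) (imgE f V E) k c"
    then show "\<exists>c. proper_colouring V E k c" using imgE_proper[OF inj] by blast
  next
    fix k assume "\<exists>c. proper_colouring V E k c"
    then obtain c where c: "proper_colouring V E k c" by blast
    have "proper_colouring V E k ((c \<circ> inv_into V f) \<circ> f)"
      using c proper_cong[of V "(c \<circ> inv_into V f) \<circ> f" c] inj by (simp add: inv_into_f_f)
    then show "\<exists>c. proper_colouring (f ` V) (imgE f V E) k c" using imgE_proper[OF inj] by blast
  qed
  then show ?thesis unfolding chromatic_number_def by simp
qed

lemma imgE_dchi:
  assumes inj: "inj_on f V"
  shows "r_dynamic_chromatic_number r (f ` V) (imgE f V E) = r_dynamic_chromatic_number r V E"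
proof -
  have "\<And>k. (\<exists>c. r_dynamic_colouring r (f ` V) (imgE f V E) k c) = (\<exists>c. r_dynamic_colouring r V E k c)"
  proof
    fix k assume "\<exists>c. r_dynamic_colouring r (f ` V) (imgE f V E) k c"
    then show "\<exists>c. r_dynamic_colouring r V E k c" using imgE_dyn[OF inj] by blast
  next
    fix k assume "\<exists>c. r_dynamic_colouring r V E k c"
    then obtain c where c: "r_dynamic_colouring r V E k c" by blast
    have "r_dynamic_colouring r V E k ((c \<circ> inv_into V f) \<circ> f)"
      using c dyn_cong[of V "(c \<circ> inv_into V f) \<circ> f" c] inj by (simp add: inv_into_f_f)
    then show "\<exists>c. r_dynamic_colouring r (f ` V) (imgE f V E) k c" using imgE_dyn[OF inj] by blast
  qed
  then show ?thesis unfolding r_dynamic_chromatic_number_def by simp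
qed



type_synonym vt = "(nat \<times> nat \<times> nat) + (nat set \<times> nat)"

definition tt :: "nat \<Rightarrow> nat" where "tt n = 2 * n ^ 3"
definition ss :: "nat \<Rightarrow> nat" where "ss n = (tt n - 1) choose (n - 1)"
definition SS :: "nat \<Rightarrow> nat set set" where "SS n = {S. S \<subseteq> {..<tt n} \<and> card S = n}"
definition GV :: "nat \<Rightarrow> vt set" where
  "GV n = Inl ` ({..<tt n} \<times> {..<n} \<times> {..<ss n}) \<union> Inr ` (SS n \<times> {..<n})"

fun adj :: "vt \<Rightarrow> vt \<Rightarrow> bool" where
  "adj (Inl (a,i,x)) (Inl (b,j,y)) = (a = b \<and> i \<noteq> j)"
| "adj (Inl (a,i,x)) (Inr (S,j)) = (a \<in> S \<and> i = j)"
| "adj (Inr (S,j)) (Inl (a,i,x)) = (a \<in> S \<and> i = j)"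
| "adj (Inr _) (Inr _) = False"

definition GE :: "nat \<Rightarrow> vt \<Rightarrow> vt \<Rightarrow> bool" where
  "GE n u v = (u \<in> GV n \<and> v \<in> GV n \<and> adj u v)"

lemma inl_GV[simp]: "Inl (a,i,x) \<in> GV n \<longleftrightarrow> a < tt n \<and> i < n \<and> x < ss n"
  by (auto simp: GV_def)
lemma inr_GV[simp]: "Inr (S,i) \<in> GV n \<longleftrightarrow> S \<in> SS n \<and> i < n"
  by (auto simp: GV_def)

lemma finite_SS: "finite (SS n)"
  unfolding SS_def by (rule finite_subset[of _ "Pow {..<tt n}"]) auto

lemma finite_GV: "finite (GV n)"
  unfolding GV_def using finite_SS by auto

lemma adj_sym: "adj u v = adj v u"
  by (cases u; cases v) auto

lemma adj_irrefl: "\<not> adj v v"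
  by (cases v) auto

lemma simple_G: "simple_graph (GV n) (GE n)"
  unfolding simple_graph_def GE_def using finite_GV adj_sym adj_irrefl by blast

lemma nbhd_inl:
  assumes "a < tt n" "i < n" "x < ss n"
  shows "nbhd (GV n) (GE n) (Inl (a,i,x)) =
     Inl ` ({a} \<times> ({..<n} - {i}) \<times> {..<ss n}) \<union> Inr ` ({S \<in> SS n. a \<in> S} \<times> {i})"
proof (rule set_eqI)
  fix u show "u \<in> nbhd (GV n) (GE n) (Inl (a,i,x)) \<longleftrightarrow>
     u \<in> Inl ` ({a} \<times> ({..<n} - {i}) \<times> {..<ss n}) \<union> Inr ` ({S \<in> SS n. a \<in> S} \<times> {i})"
    using assms by (cases u) (auto simp: nbhd_def GE_def)
qed

lemma nbhd_inr:
  assumes "S \<in> SS n" "i < n"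
  shows "nbhd (GV n) (GE n) (Inr (S,i)) = Inl ` (S \<times> {i} \<times> {..<ss n})"
proof (rule set_eqI)
  fix u show "u \<in> nbhd (GV n) (GE n) (Inr (S,i)) \<longleftrightarrow> u \<in> Inl ` (S \<times> {i} \<times> {..<ss n})"
    using assms by (cases u) (auto simp: nbhd_def GE_def SS_def)
qed

lemma card_Inl_Inr:
  assumes "finite A" "finite B"
  shows "card (Inl ` A \<union> Inr ` B) = card A + card B"
  using assms by (subst card_Un_disjoint) (auto simp: card_image)

lemma card_SS_a:
  assumes "a < t" "1 \<le> m"
  shows "card {S. (S \<subseteq> {..<t} \<and> card S = m) \<and> a \<in> S} = (t - 1) choose (m - 1)"
proof -
  let ?A = "{T. T \<subseteq> {..<t} - {a} \<and> card T = m - 1}"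
  let ?B = "{S. (S \<subseteq> {..<t} \<and> card S = m) \<and> a \<in> S}"
  have "bij_betw (insert a) ?A ?B"
  proof (rule bij_betw_byWitness[where f' = "\<lambda>S. S - {a}"])
    show "\<forall>T\<in>?A. insert a T - {a} = T" by auto
    show "\<forall>S\<in>?B. insert a (S - {a}) = S" by auto
    show "insert a ` ?A \<subseteq> ?B"
    proof
      fix U assume "U \<in> insert a ` ?A"
      then obtain T where T: "T \<in> ?A" "U = insert a T" by auto
      then have "T \<subseteq> {..<t} - {a}" "card T = m - 1" by auto
      moreover have "finite T" using \<open>T \<subseteq> {..<t} - {a}\<close> finite_subset by blast
      moreover have "a \<notin> T" using \<open>T \<subseteq> {..<t} - {a}\<close> by auto
      ultimately have "card (insert a T) = m" using assms by (simp add: card_insert_disjoint)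
      then show "U \<in> ?B" using assms T(2) \<open>T \<subseteq> {..<t} - {a}\<close> by auto
    qed
    show "(\<lambda>S. S - {a}) ` ?B \<subseteq> ?A"
    proof
      fix U assume "U \<in> (\<lambda>S. S - {a}) ` ?B"
      then obtain S where S: "S \<in> ?B" "U = S - {a}" by auto
      then have "S \<subseteq> {..<t}" "card S = m" "a \<in> S" by auto
      moreover have "finite S" using \<open>S \<subseteq> {..<t}\<close> finite_subset by blast
      ultimately show "U \<in> ?A" using S(2) by auto
    qed
  qed
  then have "card {S. (S \<subseteq> {..<t} \<and> card S = m) \<and> a \<in> S} = card ?A"
    by (simp add: bij_betw_same_card)
  also have "\<dots> = card ({..<t} - {a}) choose (m - 1)"
    by (rule n_subsets) auto
  also have "card ({..<t} - {a}) = t - 1" using assms by simp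
  finally show ?thesis .
qed

lemma choose_ge2: "0 < k \<Longrightarrow> k < m \<Longrightarrow> 2 \<le> m choose k"
proof -
  assume "0 < k" "k < m"
  then obtain m' k' where m: "m = Suc m'" and k: "k = Suc k'"
    by (metis gr0_implies_Suc less_imp_Suc_add)
  have "Suc m' choose Suc k' = (m' choose k') + (m' choose Suc k')" by simp
  moreover have "0 < m' choose k'" "0 < m' choose Suc k'"
    using \<open>k < m\<close> m k by auto
  ultimately show ?thesis unfolding m k by linarith
qed

lemma tt_ge: "2 \<le> n \<Longrightarrow> n < tt n - 1"
proof -
  assume n: "2 \<le> n"
  have "2 * 2 \<le> n * n" using mult_le_mono[OF n n] .
  then have "2 < 2 * n * n" by linarith
  then have h: "n * 2 < n * (2 * n * n)" using n by (intro mult_strict_left_mono) auto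
  have eq: "tt n = n * (2 * n * n)" by (simp add: tt_def power3_eq_cube algebra_simps)
  show ?thesis unfolding eq using h n by linarith
qed

lemma ss_ge2: "2 \<le> n \<Longrightarrow> 2 \<le> ss n"
  unfolding ss_def using tt_ge[of n] by (intro choose_ge2) auto

lemma degree_G:
  assumes n: "2 \<le> n" and v: "v \<in> GV n"
  shows "degree (GV n) (GE n) v = n * ss n"
proof (cases v)
  case (Inl p)
  then obtain a i x where p: "v = Inl (a,i,x)" by (cases p) auto
  then have a: "a < tt n" "i < n" "x < ss n" using v by auto
  have c1: "card ({a} \<times> ({..<n} - {i}) \<times> {..<ss n}) = (n - 1) * ss n"
    using a by (simp add: card_cartesian_product)
  have c2: "card ({S \<in> SS n. a \<in> S} \<times> {i}) = ss n"
    using card_SS_a[of a "tt n" n] a n by (simp add: card_cartesian_product SS_def ss_def)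
  have "degree (GV n) (GE n) v = (n - 1) * ss n + ss n"
    unfolding degree_def p nbhd_inl[OF a] using c1 c2 finite_SS
    by (subst card_Inl_Inr) auto
  also have "\<dots> = n * ss n" using n by (cases n) auto
  finally show ?thesis .
next
  case (Inr p)
  then obtain S i where p: "v = Inr (S,i)" by (cases p) auto
  then have a: "S \<in> SS n" "i < n" using v by auto
  then have "finite S" "card S = n" unfolding SS_def using finite_subset by auto
  then show ?thesis unfolding degree_def p nbhd_inr[OF a]
    by (simp add: card_image card_cartesian_product)
qed

lemma regular_G: "2 \<le> n \<Longrightarrow> regular (GV n) (GE n)"
  unfolding regular_def using degree_G by blast



fun colA :: "nat \<Rightarrow> vt \<Rightarrow> nat" where
  "colA n (Inl (a,i,x)) = i + 1"
| "colA n (Inr (S,i)) = Suc i mod n + 1"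

fun colB :: "nat \<Rightarrow> vt \<Rightarrow> nat" where
  "colB n (Inl (a,i,x)) = (if x = 0 then i + 1 else i + 1 + n)"
| "colB n (Inr (S,i)) = Suc i mod n + 1"

lemma mod_ne: "2 \<le> n \<Longrightarrow> i < n \<Longrightarrow> Suc i mod n \<noteq> i"
proof -
  assume n: "2 \<le> n" and i: "i < n"
  show ?thesis
  proof (cases "Suc i < n")
    case True then show ?thesis by simp
  next
    case False then have "Suc i = n" using i by simp
    then show ?thesis using n by auto
  qed
qed

lemma mod_lt: "2 \<le> n \<Longrightarrow> Suc i mod n < n" by simp
lemma mod_lt2: "2 \<le> n \<Longrightarrow> Suc i mod n < 2 * n" using mod_lt[of n i] by linarith
lemma mod_ne2: "2 \<le> n \<Longrightarrow> Suc i mod n \<noteq> i + n" using mod_lt[of n i] by linarith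
lemma mod_ne2': "2 \<le> n \<Longrightarrow> i + n \<noteq> Suc i mod n" using mod_lt[of n i] by linarith
lemma mod_ne': "2 \<le> n \<Longrightarrow> i < n \<Longrightarrow> i \<noteq> Suc i mod n"
  using mod_ne[of n i] by (rule not_sym)

lemma adjE:
  assumes "adj u v"
  obtains (XX) a i x j y where "u = Inl (a,i,x)" "v = Inl (a,j,y)" "i \<noteq> j"
  | (XW) a i x S where "u = Inl (a,i,x)" "v = Inr (S,i)" "a \<in> S"
  | (WX) a i x S where "u = Inr (S,i)" "v = Inl (a,i,x)" "a \<in> S"
  using assms by (cases u; cases v) auto

lemma colA_proper: "2 \<le> n \<Longrightarrow> proper_colouring (GV n) (GE n) n (colA n)"
  unfolding proper_colouring_def
proof (intro conjI ballI impI)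
  fix v assume n: "2 \<le> n" and v: "v \<in> GV n"
  show "colA n v \<in> {1..n}"
  proof (cases v)
    case (Inl p) then obtain a i x where p: "v = Inl (a,i,x)" by (cases p) auto
    then have "i < n" using v by simp
    then show ?thesis using p by simp
  next
    case (Inr p) then obtain S i where p: "v = Inr (S,i)" by (cases p) auto
    have "Suc i mod n < n" by (rule mod_lt[OF n])
    then show ?thesis using p by simp
  qed
next
  fix u v assume n: "2 \<le> n" and u: "u \<in> GV n" and v: "v \<in> GV n" and e: "GE n u v"
  have a: "adj u v" using e by (simp add: GE_def)
  show "colA n u \<noteq> colA n v"
    using a
  proof (cases rule: adjE)
    case (XX a i x j y) then show ?thesis by simp
  next
    case (XW a i x S) then have "i < n" using v by simp
    then show ?thesis using XW mod_ne'[OF n] by simp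
  next
    case (WX a i x S) then have "i < n" using u by simp
    then show ?thesis using WX mod_ne[OF n] by simp
  qed
qed

lemma colB_dyn: "2 \<le> n \<Longrightarrow> r_dynamic_colouring 2 (GV n) (GE n) (2 * n) (colB n)"
  unfolding r_dynamic_colouring_def proper_colouring_def
proof (intro conjI ballI impI)
  fix v assume n: "2 \<le> n" and v: "v \<in> GV n"
  show "colB n v \<in> {1..2 * n}"
  proof (cases v)
    case (Inl p) then obtain a i x where p: "v = Inl (a,i,x)" by (cases p) auto
    then have "i < n" using v by simp
    then show ?thesis using p by simp
  next
    case (Inr p) then obtain S i where p: "v = Inr (S,i)" by (cases p) auto
    have "Suc i mod n < n" by (rule mod_lt[OF n])
    then show ?thesis using p by simp
  qed
next
  fix u v assume n: "2 \<le> n" and u: "u \<in> GV n" and v: "v \<in> GV n" and e: "GE n u v"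
  have a: "adj u v" using e by (simp add: GE_def)
  show "colB n u \<noteq> colB n v"
    using a
  proof (cases rule: adjE)
    case (XX a i x j y) then have "i < n" "j < n" using u v by simp_all
    then show ?thesis using XX by auto
  next
    case (XW a i x S) then have "i < n" using v by simp
    then show ?thesis using XW mod_ne'[OF n] mod_ne2'[OF n, of i] by simp
  next
    case (WX a i x S) then have "i < n" using u by simp
    then show ?thesis using WX mod_ne[OF n] mod_ne2[OF n, of i] by simp
  qed
next
  fix v assume n: "2 \<le> n" and v: "v \<in> GV n"
  have s2: "2 \<le> ss n" using ss_ge2[OF n] .
  have fin: "finite (colB n ` nbhd (GV n) (GE n) v)"
    using finite_subset[OF nbhd_subset finite_GV] by (rule finite_imageI)
  have two: "\<exists>p q. p \<in> nbhd (GV n) (GE n) v \<and> q \<in> nbhd (GV n) (GE n) v \<and> colB n p \<noteq> colB n q"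
  proof (cases v)
    case (Inl pp)
    then obtain a i x where p: "v = Inl (a,i,x)" by (cases pp) auto
    then have a: "a < tt n" "i < n" "x < ss n" using v by auto
    define j where "j = (if i = 0 then 1 else 0::nat)"
    have j: "j < n" "j \<noteq> i" using n unfolding j_def by auto
    show ?thesis
      apply (rule exI[of _ "Inl (a,j,0)"], rule exI[of _ "Inl (a,j,1)"])
      unfolding p nbhd_inl[OF a] using j s2 n by auto
  next
    case (Inr pp)
    then obtain S i where p: "v = Inr (S,i)" by (cases pp) auto
    then have a: "S \<in> SS n" "i < n" using v by auto
    then have "card S = n" by (auto simp: SS_def)
    then have "S \<noteq> {}" using n by (intro notI) simp
    then obtain b where b: "b \<in> S" by blast
    show ?thesis
      apply (rule exI[of _ "Inl (b,i,0)"], rule exI[of _ "Inl (b,i,1)"])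
      unfolding p nbhd_inr[OF a] using b s2 n by auto
  qed
  then obtain p q where "p \<in> nbhd (GV n) (GE n) v" "q \<in> nbhd (GV n) (GE n) v" "colB n p \<noteq> colB n q"
    by blast
  then have sub: "{colB n p, colB n q} \<subseteq> colB n ` nbhd (GV n) (GE n) v" by blast
  have c2: "card {colB n p, colB n q} = 2" using \<open>colB n p \<noteq> colB n q\<close> by simp
  have "card {colB n p, colB n q} \<le> card (colB n ` nbhd (GV n) (GE n) v)"
    by (rule card_mono[OF fin sub])
  then show "min 2 (degree (GV n) (GE n) v) \<le> card (colB n ` nbhd (GV n) (GE n) v)"
    unfolding c2 by (simp add: min_le_iff_disj)
qed

lemma chi_lower:
  assumes n: "2 \<le> n" and c: "proper_colouring (GV n) (GE n) k c"
  shows "n \<le> k"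
proof -
  have t: "0 < tt n" using tt_ge[OF n] by linarith
  have s: "0 < ss n" using ss_ge2[OF n] by linarith
  let ?h = "\<lambda>i. c (Inl (0,i,0))"
  have "inj_on ?h {..<n}"
  proof (rule inj_onI)
    fix i j assume "i \<in> {..<n}" "j \<in> {..<n}" "?h i = ?h j"
    show "i = j"
    proof (rule ccontr)
      assume "i \<noteq> j"
      then have "GE n (Inl (0,i,0)) (Inl (0,j,0))" using \<open>i \<in> {..<n}\<close> \<open>j \<in> {..<n}\<close> t s
        by (auto simp: GE_def)
      moreover have "Inl (0,i,0) \<in> GV n" "Inl (0,j,0) \<in> GV n"
        using \<open>i \<in> {..<n}\<close> \<open>j \<in> {..<n}\<close> t s by auto
      ultimately have "?h i \<noteq> ?h j" using c unfolding proper_colouring_def by blast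
      then show False using \<open>?h i = ?h j\<close> by simp
    qed
  qed
  moreover have "?h ` {..<n} \<subseteq> {1..k}" using c t s unfolding proper_colouring_def by auto
  ultimately have "card {..<n} \<le> card {1..k}" by (intro card_inj_on_le) auto
  then show ?thesis by simp
qed

lemma chi_G: "2 \<le> n \<Longrightarrow> chromatic_number (GV n) (GE n) = n"
proof -
  assume n: "2 \<le> n"
  show ?thesis unfolding chromatic_number_def
  proof (rule Least_equality)
    show "\<exists>c. proper_colouring (GV n) (GE n) n c" using colA_proper[OF n] by blast
  next
    fix k assume "\<exists>c. proper_colouring (GV n) (GE n) k c"
    then obtain c where "proper_colouring (GV n) (GE n) k c" by blast
    then show "n \<le> k" using chi_lower[OF n] by blast
  qed
qed



lemma pigeon:
  assumes fQ: "finite Q" and gA: "g ` A \<subseteq> Q" and fA: "finite A" and lt: "card Q * m < card A"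
  shows "\<exists>q\<in>Q. m < card {a\<in>A. g a = q}"
proof (rule ccontr)
  assume "\<not> (\<exists>q\<in>Q. m < card {a\<in>A. g a = q})"
  then have le: "\<forall>q\<in>Q. card {a\<in>A. g a = q} \<le> m" by auto
  have "A \<subseteq> (\<Union>q\<in>Q. {a\<in>A. g a = q})" using gA by blast
  then have "card A \<le> card (\<Union>q\<in>Q. {a\<in>A. g a = q})"
    using fQ fA by (intro card_mono) auto
  also have "\<dots> \<le> (\<Sum>q\<in>Q. card {a\<in>A. g a = q})" by (rule card_UN_le[OF fQ])
  also have "\<dots> \<le> (\<Sum>q\<in>Q. m)" using le by (intro sum_mono) auto
  also have "\<dots> = card Q * m" by simp
  finally show False using lt by linarith
qed

lemma count_bound:
  assumes n: "2 \<le> n" and k: "k < 2 * n"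
  shows "(card ({..<n} \<times> {1..k})) * (n - 1) < card {..<tt n}"
proof -
  have "card ({..<n} \<times> {1..k}) = n * k" by (simp add: card_cartesian_product)
  moreover have "k * (n - 1) < (2 * n) * n"
  proof -
    have "k * (n - 1) \<le> k * n" by simp
    also have "\<dots> < (2 * n) * n" using k n by (intro mult_strict_right_mono) auto
    finally show ?thesis .
  qed
  then have "n * (k * (n - 1)) < n * ((2 * n) * n)" using n by (intro mult_strict_left_mono) auto
  moreover have "tt n = n * ((2 * n) * n)" by (simp add: tt_def power3_eq_cube algebra_simps)
  ultimately show ?thesis by (simp add: algebra_simps)
qed

lemma dyn_lower:
  assumes n: "2 \<le> n" and col: "r_dynamic_colouring 2 (GV n) (GE n) k c"
  shows "2 * n \<le> k"
proof (rule ccontr)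
  assume "\<not> 2 * n \<le> k"
  then have kl: "k < 2 * n" by simp
  have pcol: "proper_colouring (GV n) (GE n) k c" using col by (simp add: r_dynamic_colouring_def)
  have dyn: "\<forall>v\<in>GV n. min 2 (degree (GV n) (GE n) v) \<le> card (c ` nbhd (GV n) (GE n) v)"
    using col by (simp add: r_dynamic_colouring_def)
  have s2: "2 \<le> ss n" using ss_ge2[OF n] .
  have rng: "\<And>v. v \<in> GV n \<Longrightarrow> c v \<in> {1..k}" using pcol by (simp add: proper_colouring_def)
  have adjX: "\<And>a i j x y. a < tt n \<Longrightarrow> i < n \<Longrightarrow> j < n \<Longrightarrow> x < ss n \<Longrightarrow> y < ss n \<Longrightarrow> i \<noteq> j
      \<Longrightarrow> c (Inl (a,i,x)) \<noteq> c (Inl (a,j,y))"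
  proof -
    fix a i j x y assume h: "a < tt n" "i < n" "j < n" "x < ss n" "y < ss n" "i \<noteq> j"
    then have "GE n (Inl (a,i,x)) (Inl (a,j,y))" by (simp add: GE_def)
    moreover have "Inl (a,i,x) \<in> GV n" "Inl (a,j,y) \<in> GV n" using h by auto
    ultimately show "c (Inl (a,i,x)) \<noteq> c (Inl (a,j,y))" using pcol unfolding proper_colouring_def by blast
  qed
  have mono_part: "\<forall>a<tt n. \<exists>i<n. \<forall>x<ss n. c (Inl (a,i,x)) = c (Inl (a,i,0))"
  proof (intro allI impI, rule ccontr)
    fix a assume a: "a < tt n" and neg: "\<not> (\<exists>i<n. \<forall>x<ss n. c (Inl (a,i,x)) = c (Inl (a,i,0)))"
    then have "\<forall>i. \<exists>x. i < n \<longrightarrow> x < ss n \<and> c (Inl (a,i,x)) \<noteq> c (Inl (a,i,0))" by blast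
    from choice[OF this] obtain xf where xf0: "\<forall>i. i < n \<longrightarrow> xf i < ss n \<and> c (Inl (a,i,xf i)) \<noteq> c (Inl (a,i,0))"
      by blast
    then have xf: "\<And>i. i < n \<Longrightarrow> xf i < ss n \<and> c (Inl (a,i,xf i)) \<noteq> c (Inl (a,i,0))" by blast
    define xv where "xv = (\<lambda>i (b::bool). if b then xf i else 0)"
    have xv: "\<And>i b. i < n \<Longrightarrow> xv i b < ss n" using xf s2 unfolding xv_def by auto
    define h where "h = (\<lambda>(i, b::bool). c (Inl (a,i,xv i b)))"
    have hv: "\<And>i b. h (i,b) = c (Inl (a,i,xv i b))" unfolding h_def by simp
    have inj: "inj_on h ({..<n} \<times> UNIV)"
    proof (rule inj_onI)
      fix p q assume p: "p \<in> {..<n} \<times> (UNIV::bool set)" and q: "q \<in> {..<n} \<times> (UNIV::bool set)" and e: "h p = h q"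
      obtain i b where pi: "p = (i,b)" by (cases p)
      obtain j d where qj: "q = (j,d)" by (cases q)
      have i: "i < n" and j: "j < n" using p q pi qj by auto
      have e2: "c (Inl (a,i,xv i b)) = c (Inl (a,j,xv j d))" using e hv pi qj by simp
      show "p = q"
      proof (cases "i = j")
        case True
        have "b = d"
        proof (rule ccontr)
          assume bd: "b \<noteq> d"
          have xfi: "c (Inl (a,i,xf i)) \<noteq> c (Inl (a,i,0))" using xf[OF i] by blast
          have x1: "xv i True = xf i" and x0: "xv i False = 0" unfolding xv_def by simp_all
          have "(b \<and> \<not> d) \<or> (\<not> b \<and> d)" using bd by blast
          then have "c (Inl (a,i,xv i b)) \<noteq> c (Inl (a,i,xv i d))"
          proof
            assume "b \<and> \<not> d" then show ?thesis using xfi x1 x0 by simp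
          next
            assume "\<not> b \<and> d" then show ?thesis using not_sym[OF xfi] x1 x0 by simp
          qed
          then show False using e2 True by simp
        qed
        then show ?thesis using pi qj True by simp
      next
        case False
        have "c (Inl (a,i,xv i b)) \<noteq> c (Inl (a,j,xv j d))"
          by (rule adjX[OF a i j xv[OF i] xv[OF j] False])
        then show ?thesis using e2 by simp
      qed
    qed
    have img: "h ` ({..<n} \<times> UNIV) \<subseteq> {1..k}"
    proof
      fix z assume "z \<in> h ` ({..<n} \<times> UNIV)"
      then obtain i b where i: "i < n" and z: "z = h (i,b)" by auto
      have "Inl (a,i,xv i b) \<in> GV n" using xv[OF i] a i by simp
      then show "z \<in> {1..k}" using rng z hv by simp
    qed
    have "card ({..<n} \<times> (UNIV::bool set)) \<le> card {1..k}"
      by (rule card_inj_on_le[OF inj img]) simp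
    then have "2 * n \<le> k" by (simp add: card_cartesian_product)
    then show False using kl by simp
  qed
  define g where "g = (\<lambda>a. SOME q. fst q < n \<and> (\<forall>x<ss n. c (Inl (a, fst q, x)) = snd q))"
  have g: "\<And>a. a < tt n \<Longrightarrow> fst (g a) < n \<and> (\<forall>x<ss n. c (Inl (a, fst (g a), x)) = snd (g a))"
  proof -
    fix a assume a: "a < tt n"
    then obtain i where i: "i < n" "\<forall>x<ss n. c (Inl (a,i,x)) = c (Inl (a,i,0))" using mono_part by blast
    have "fst (i, c (Inl (a,i,0))) < n \<and> (\<forall>x<ss n. c (Inl (a, fst (i, c (Inl (a,i,0))), x)) = snd (i, c (Inl (a,i,0))))"
      unfolding fst_conv snd_conv using i by blast
    then have "\<exists>q. fst q < n \<and> (\<forall>x<ss n. c (Inl (a, fst q, x)) = snd q)" by (rule exI)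
    then show "fst (g a) < n \<and> (\<forall>x<ss n. c (Inl (a, fst (g a), x)) = snd (g a))"
      unfolding g_def by (rule someI_ex)
  qed
  have gQ: "g ` {..<tt n} \<subseteq> {..<n} \<times> {1..k}"
  proof
    fix z assume "z \<in> g ` {..<tt n}"
    then obtain a where a: "a < tt n" and z: "z = g a" by blast
    obtain i0 col0 where ga: "g a = (i0, col0)" by (cases "g a")
    have i0: "i0 < n" and allx: "\<forall>x<ss n. c (Inl (a, i0, x)) = col0" using g[OF a] unfolding ga by simp_all
    have s0: "0 < ss n" using s2 by simp
    have col0: "c (Inl (a, i0, 0)) = col0" using allx s0 by blast
    have "Inl (a, i0, 0) \<in> GV n" using a i0 s0 by simp
    then have "col0 \<in> {1..k}" using rng col0 by blast
    then show "z \<in> {..<n} \<times> {1..k}" using z ga i0 by simp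
  qed
  obtain q where q: "q \<in> {..<n} \<times> {1..k}" and big: "n - 1 < card {a\<in>{..<tt n}. g a = q}"
    using pigeon[OF _ gQ _ count_bound[OF n kl]] by auto
  obtain i col where qi: "q = (i, col)" by (cases q)
  have i: "i < n" using q qi by simp
  have "n \<le> card {a\<in>{..<tt n}. g a = q}" using big by simp
  then obtain S where S: "S \<subseteq> {a\<in>{..<tt n}. g a = q}" "card S = n" "finite S"
    by (rule obtain_subset_with_card_n)
  have SS: "S \<in> SS n" using S by (auto simp: SS_def)
  have w: "Inr (S,i) \<in> GV n" using SS i by simp
  have sub: "c ` nbhd (GV n) (GE n) (Inr (S,i)) \<subseteq> {col}"
  proof
    fix z assume "z \<in> c ` nbhd (GV n) (GE n) (Inr (S,i))"
    then obtain a x where a: "a \<in> S" and x: "x < ss n" and z: "z = c (Inl (a,i,x))"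
      unfolding nbhd_inr[OF SS i] by auto
    have at: "a < tt n" and ga: "g a = (i,col)" using S a qi by auto
    show "z \<in> {col}" using g[OF at] ga x z by simp
  qed
  have "card (c ` nbhd (GV n) (GE n) (Inr (S,i))) \<le> card {col}"
    by (rule card_mono[OF _ sub]) simp
  then have c1: "card (c ` nbhd (GV n) (GE n) (Inr (S,i))) \<le> 1" by simp
  have "degree (GV n) (GE n) (Inr (S,i)) = n * ss n" using degree_G[OF n w] .
  moreover have "2 \<le> n * ss n" using n s2 mult_le_mono[of 1 n 2 "ss n"] by simp
  ultimately have "min 2 (degree (GV n) (GE n) (Inr (S,i))) = 2" by simp
  moreover have "min 2 (degree (GV n) (GE n) (Inr (S,i))) \<le> card (c ` nbhd (GV n) (GE n) (Inr (S,i)))"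
    using dyn w by blast
  ultimately show False using c1 by linarith
qed

lemma dchi_G: "2 \<le> n \<Longrightarrow> r_dynamic_chromatic_number 2 (GV n) (GE n) = 2 * n"
proof -
  assume n: "2 \<le> n"
  show ?thesis unfolding r_dynamic_chromatic_number_def
  proof (rule Least_equality)
    show "\<exists>c. r_dynamic_colouring 2 (GV n) (GE n) (2 * n) c" using colB_dyn[OF n] by blast
  next
    fix k assume "\<exists>c. r_dynamic_colouring 2 (GV n) (GE n) k c"
    then obtain c where "r_dynamic_colouring 2 (GV n) (GE n) k c" by blast
    then show "2 * n \<le> k" using dyn_lower[OF n] by blast
  qed
qed

fun enc :: "vt \<Rightarrow> (nat \<times> nat \<times> nat) + (nat \<times> nat)" where
  "enc (Inl p) = Inl p"
| "enc (Inr (S,i)) = Inr (set_encode S, i)"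

lemma inj_enc: "inj_on (to_nat \<circ> enc) (GV n)"
proof (rule inj_onI)
  fix u v assume u: "u \<in> GV n" and v: "v \<in> GV n" and e: "(to_nat \<circ> enc) u = (to_nat \<circ> enc) v"
  then have e2: "enc u = enc v" by simp
  have fin: "\<And>S. S \<in> SS n \<Longrightarrow> finite S" unfolding SS_def using finite_subset by auto
  show "u = v"
  proof (cases u)
    case (Inl p) then show ?thesis using e2 by (cases v) auto
  next
    case (Inr p)
    then obtain S i where p: "u = Inr (S,i)" by (cases p) auto
    show ?thesis
    proof (cases v)
      case (Inl p') then show ?thesis using e2 p by simp
    next
      case (Inr p')
      then obtain S' i' where p': "v = Inr (S',i')" by (cases p') auto
      have "S \<in> SS n" "S' \<in> SS n" using u v p p' by auto
      then show ?thesis using e2 p p' fin set_encode_eq by auto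
    qed
  qed
qed

theorem theorem1p2:
  fixes n :: nat
  assumes "n \<ge> 2"
  shows "\<exists>(V :: nat set) E. simple_graph V E \<and> regular V E \<and>
           chromatic_number V E = n \<and>
           r_dynamic_chromatic_number 2 V E = 2 * chromatic_number V E"
proof -
  have n: "2 \<le> n" using assms .
  let ?f = "to_nat \<circ> enc"
  have inj: "inj_on ?f (GV n)" by (rule inj_enc)
  show ?thesis
  proof (intro exI conjI)
    show "simple_graph (?f ` GV n) (imgE ?f (GV n) (GE n))" by (rule imgE_simple[OF inj simple_G])
    show "regular (?f ` GV n) (imgE ?f (GV n) (GE n))" by (rule imgE_regular[OF inj regular_G[OF n]])
    show "chromatic_number (?f ` GV n) (imgE ?f (GV n) (GE n)) = n"
      using imgE_chi[OF inj] chi_G[OF n] by simp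
    show "r_dynamic_chromatic_number 2 (?f ` GV n) (imgE ?f (GV n) (GE n)) =
       2 * chromatic_number (?f ` GV n) (imgE ?f (GV n) (GE n))"
      using imgE_chi[OF inj] chi_G[OF n] imgE_dchi[OF inj] dchi_G[OF n] by simp
  qed
qed

end
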